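(* Let $N \geq 1$ and $A \geq 0$ be integers, and suppose $A$ items are drawn uniformly at random with replacement from a sample of $N$ items (each draw independent and each item equally likely). Let $k$ be the number of distinct original items appearing among the $A$ draws, so that $$\mathbb{P}(k) = \frac{N^{\underline{k}}}{N^{A}} \left\{ {A \atop k} \right\}, \qquad k = 0,1,\dots,N.$$ Then for every integer $t \geq 0$, the $t$-th raw moment $\mu'_t = \mathbb{E}[k^t]$ satisfies $$\mu'_t = \sum_{k=0}^{N} k^t \frac{N^{\underline{k}}}{N^{A}} \left\{ {A \atop k} \right\} = \sum_{\substack{u,v,w \in \mathbb{N}_0 \\ u+v+w = t}} \binom{t}{u} (-1)^{v} \left\{ {v+w \atop v} \right\} N^{\underline{v}} (N-v)^{u} \Big(1 - \frac{v}{N}\Big)^{A}.$$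
   Context: $\mathbb{N}_0$ denotes the nonnegative integers. $N^{\underline{k}}$ is the falling factorial: $N^{\underline{k}} = N!/(N-k)!$ if $k \leq N$ and $0$ otherwise. $\left\{ {n \atop m} \right\}$ is the Stirling number of the second kind (the number of partitions of an $n$-element set into $m$ nonempty blocks), with $\left\{ {0 \atop 0} \right\} = 1$, $\left\{ {n \atop 0} \right\} = 0$ for $n > 0$, and $\left\{ {n \atop m} \right\} = 0$ for $m < 0$ or $m > n$. The convention $0^0 = 1$ is used. *)

theory Defs
  imports "HOL-Probability.Probability" "HOL-Combinatorics.Stirling"
begin

definition falling_fact :: "nat \<Rightarrow> nat \<Rightarrow> nat" where
  "falling_fact N k = (if k \<le> N then fact N div fact (N - k) else 0)"

text \<open>Sampling model: A draws with replacement from N items = a uniformly random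
  function from the draw indices {..<A} to the items {..<N}.\<close>
definition draws_pmf :: "nat \<Rightarrow> nat \<Rightarrow> (nat \<Rightarrow> nat) pmf" where
  "draws_pmf N A = pmf_of_set (PiE {..<A} (\<lambda>_. {..<N}))"

definition distinct_count :: "nat \<Rightarrow> (nat \<Rightarrow> nat) \<Rightarrow> nat" where
  "distinct_count A f = card (f ` {..<A})"

end

theory Submission
  imports Defs
begin


definition ffr :: "real \<Rightarrow> nat \<Rightarrow> real" where
  "ffr x v = (\<Prod>i<v. (x - real i))"

lemma ffr_0[simp]: "ffr x 0 = 1" by (simp add: ffr_def)

lemma ffr_Suc: "ffr x (Suc v) = ffr x v * (x - real v)"
  by (simp add: ffr_def)

lemma ffr_Suc': "ffr x (Suc v) = x * ffr (x - 1) v"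
  unfolding ffr_def
  by (subst prod.lessThan_Suc_shift) (simp add: algebra_simps)

lemma ffr_add: "ffr x (a + b) = ffr x a * ffr (x - real a) b"
proof (induction a arbitrary: x)
  case 0 then show ?case by simp
next
  case (Suc a)
  show ?case using Suc[of "x - 1"] by (simp add: ffr_Suc' algebra_simps)
qed

lemma ffr_nat_zero: "v > n \<Longrightarrow> ffr (real n) v = 0"
  unfolding ffr_def by (rule prod_zero) auto

lemma Stirling_Suc_gen:
  "Stirling (Suc s) v = v * Stirling s v + (if v = 0 then 0 else Stirling s (v - 1))"
  by (cases v) auto

lemma stirling_ffr: "(\<Sum>k\<le>A. real (Stirling A k) * ffr x k) = x ^ A"
proof (induction A)
  case 0 then show ?case by (simp add: atMost_Suc)
next
  case (Suc A)
  have "x ^ Suc A = x * (\<Sum>k\<le>A. real (Stirling A k) * ffr x k)"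
    using Suc.IH by simp
  also have "\<dots> = (\<Sum>k\<le>A. real (Stirling A k) * (x * ffr x k))"
    by (simp add: sum_distrib_left algebra_simps)
  also have "\<dots> = (\<Sum>k\<le>A. real (Stirling A k) * ffr x (Suc k)) + (\<Sum>k\<le>A. real k * real (Stirling A k) * ffr x k)"
    by (simp add: ffr_Suc sum.distrib[symmetric] algebra_simps)
  also have "(\<Sum>k\<le>A. real (Stirling A k) * ffr x (Suc k)) = (\<Sum>k\<le>Suc A. (if k = 0 then 0 else real (Stirling A (k - 1))) * ffr x k)"
    by (subst sum.atMost_Suc_shift) simp
  also have "(\<Sum>k\<le>A. real k * real (Stirling A k) * ffr x k) = (\<Sum>k\<le>Suc A. real k * real (Stirling A k) * ffr x k)"
    by simp
  also have "(\<Sum>k\<le>Suc A. (if k = 0 then 0 else real (Stirling A (k - 1))) * ffr x k) + \<dots>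
      = (\<Sum>k\<le>Suc A. real (Stirling (Suc A) k) * ffr x k)"
    by (subst sum.distrib[symmetric], rule sum.cong) (auto simp: Stirling_Suc_gen algebra_simps)
  finally show ?case ..
qed

definition dd :: "nat \<Rightarrow> nat \<Rightarrow> real \<Rightarrow> real" where
  "dd t v z = (\<Sum>s\<le>t. real (t choose s) * real (Stirling s v) * z ^ (t - s))"

lemma dd_0: "dd 0 v z = (if v = 0 then 1 else 0)"
  by (cases v) (simp_all add: dd_def)

lemma dd_Suc: "dd (Suc t) v z = (z + real v) * dd t v z + (if v = 0 then 0 else dd t (v - 1) z)"
proof -
  have "dd (Suc t) v z = real (Stirling 0 v) * z ^ Suc t
      + (\<Sum>s\<le>t. real (Suc t choose Suc s) * real (Stirling (Suc s) v) * z ^ (t - s))"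
    unfolding dd_def by (subst sum.atMost_Suc_shift) simp
  also have "\<dots> = (real (Stirling 0 v) * z ^ Suc t
      + (\<Sum>s\<le>t. real (t choose Suc s) * real (Stirling (Suc s) v) * z ^ (t - s)))
      + (\<Sum>s\<le>t. real (t choose s) * real (Stirling (Suc s) v) * z ^ (t - s))"
    by (simp add: sum.distrib algebra_simps)
  also have "real (Stirling 0 v) * z ^ Suc t
      + (\<Sum>s\<le>t. real (t choose Suc s) * real (Stirling (Suc s) v) * z ^ (t - s))
      = (\<Sum>s\<le>Suc t. real (t choose s) * real (Stirling s v) * z ^ (Suc t - s))"
    by (subst sum.atMost_Suc_shift[where n=t]) simp
  also have "\<dots> = (\<Sum>s\<le>t. real (t choose s) * real (Stirling s v) * z ^ (Suc t - s))"
    by simp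
  also have "\<dots> = z * dd t v z"
    unfolding dd_def sum_distrib_left
    by (rule sum.cong) (auto simp: Suc_diff_le algebra_simps)
  also have "(\<Sum>s\<le>t. real (t choose s) * real (Stirling (Suc s) v) * z ^ (t - s))
      = real v * dd t v z + (if v = 0 then 0 else dd t (v - 1) z)"
    unfolding dd_def Stirling_Suc_gen sum_distrib_left
    by (auto simp: sum.distrib algebra_simps)
  finally show ?thesis by (simp add: algebra_simps)
qed

lemma dd_big: "v > t \<Longrightarrow> dd t v z = 0"
  unfolding dd_def by (rule sum.neutral) auto

lemma Q_id: "(\<Sum>v\<le>t. (-1) ^ v * ffr m v * dd t v (y - real v)) = (y - m) ^ t"
proof (induction t arbitrary: y m)
  case 0 then show ?case by (simp add: dd_0)
next
  case (Suc t)
  have "(\<Sum>v\<le>Suc t. (-1) ^ v * ffr m v * dd (Suc t) v (y - real v))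
     = (\<Sum>v\<le>Suc t. (-1) ^ v * ffr m v * (y * dd t v (y - real v)))
     + (\<Sum>v\<le>Suc t. (-1) ^ v * ffr m v * (if v = 0 then 0 else dd t (v - 1) (y - real v)))"
    by (simp add: dd_Suc sum.distrib[symmetric] algebra_simps)
  also have "(\<Sum>v\<le>Suc t. (-1) ^ v * ffr m v * (y * dd t v (y - real v)))
      = y * (\<Sum>v\<le>t. (-1) ^ v * ffr m v * dd t v (y - real v))"
    by (simp add: dd_big sum_distrib_left algebra_simps)
  also have "(\<Sum>v\<le>Suc t. (-1) ^ v * ffr m v * (if v = 0 then 0 else dd t (v - 1) (y - real v)))
      = - m * (\<Sum>v\<le>t. (-1) ^ v * ffr (m - 1) v * dd t v ((y - 1) - real v))"
    by (subst sum.atMost_Suc_shift) (simp add: ffr_Suc' sum_distrib_left algebra_simps)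
  finally show ?case using Suc.IH[where y=y and m=m] Suc.IH[where y="y - 1" and m="m - 1"] by (simp add: algebra_simps)
qed


lemma ff_Suc: "falling_fact N (Suc v) = falling_fact N v * (N - v)"
proof -
  have key: "falling_fact N k * fact (N - k) = (fact N :: nat)" if "k \<le> N" for k
    using that by (simp add: falling_fact_def fact_dvd)
  show ?thesis
  proof (cases "Suc v \<le> N")
    case True
    have f: "fact (N - v) = (N - v) * (fact (N - Suc v) :: nat)"
    proof -
      have "N - v = Suc (N - Suc v)" using True by simp
      then show ?thesis by (simp only: fact_Suc) simp
    qed
    have "falling_fact N (Suc v) * fact (N - Suc v) = falling_fact N v * (N - v) * fact (N - Suc v)"
      using key[of "Suc v"] key[of v] True f by (simp add: algebra_simps)
    then show ?thesis by simp
  next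
    case False
    then show ?thesis by (cases "v = N") (auto simp: falling_fact_def)
  qed
qed

lemma ff_real: "real (falling_fact N v) = ffr (real N) v"
proof (induction v)
  case 0 then show ?case by (simp add: falling_fact_def)
next
  case (Suc v)
  show ?case
  proof (cases "v \<le> N")
    case True then show ?thesis using Suc by (simp add: ff_Suc ffr_Suc of_nat_diff)
  next
    case False then show ?thesis using Suc by (simp add: ff_Suc ffr_Suc falling_fact_def)
  qed
qed

lemma stepb:
  "(\<Sum>k\<le>N. ffr (real N - real k) v * ffr (real N) k * real (Stirling A k))
    = ffr (real N) v * (real N - real v) ^ A"
proof -
  have "(\<Sum>k\<le>N. ffr (real N - real k) v * ffr (real N) k * real (Stirling A k))
     = ffr (real N) v * (\<Sum>k\<le>N. ffr (real N - real v) k * real (Stirling A k))"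
    unfolding sum_distrib_left
  proof (rule sum.cong)
    fix k assume "k \<in> {..N}"
    have "ffr (real N - real k) v * ffr (real N) k = ffr (real N) (k + v)"
      by (simp add: ffr_add)
    also have "\<dots> = ffr (real N) v * ffr (real N - real v) k"
      by (subst add.commute) (simp add: ffr_add)
    finally show "ffr (real N - real k) v * ffr (real N) k * real (Stirling A k)
        = ffr (real N) v * (ffr (real N - real v) k * real (Stirling A k))" by simp
  qed simp
  also have "\<dots> = ffr (real N) v * (real N - real v) ^ A"
  proof (cases "v \<le> N")
    case False then show ?thesis by (simp add: ffr_nat_zero)
  next
    case True
    have rv: "real N - real v = real (N - v)" using True by (simp add: of_nat_diff)
    have "(\<Sum>k\<le>N. ffr (real N - real v) k * real (Stirling A k))
        = (\<Sum>k\<le>N + A. ffr (real N - real v) k * real (Stirling A k))"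
      by (rule sum.mono_neutral_left) (auto simp: rv ffr_nat_zero)
    also have "\<dots> = (\<Sum>k\<le>A. ffr (real N - real v) k * real (Stirling A k))"
      by (rule sum.mono_neutral_right) auto
    also have "\<dots> = (real N - real v) ^ A"
      using stirling_ffr[of A "real N - real v"] by (simp add: mult.commute)
    finally show ?thesis by simp
  qed
  finally show ?thesis .
qed




lemma part3:
  fixes N A t :: nat
  assumes "N \<ge> 1"
  shows "(\<Sum>k = 0..N. real k ^ t * (real (falling_fact N k) / real N ^ A) * real (Stirling A k))
        = (\<Sum>(u, v, w) \<in> {(u, v, w). u + v + w = t}.
             real (t choose u) * (-1) ^ v * real (Stirling (v + w) v) * real (falling_fact N v)
             * (real N - real v) ^ u * (1 - real v / real N) ^ A)"
proof -
  have Npos: "real N > 0" using assms by simp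
  define G where "G v s = real (t choose s) * (-1) ^ v * real (Stirling s v) * real (falling_fact N v)
             * (real N - real v) ^ (t - s) * (1 - real v / real N) ^ A" for v s
  have pw: "(1 - real v / real N) ^ A = (real N - real v) ^ A / real N ^ A" for v
  proof -
    have "1 - real v / real N = (real N - real v) / real N" using Npos by (simp add: field_simps)
    then show ?thesis by (simp add: power_divide)
  qed
  have "(\<Sum>k = 0..N. real k ^ t * (real (falling_fact N k) / real N ^ A) * real (Stirling A k))
     = (\<Sum>k\<le>N. \<Sum>v\<le>t. (-1) ^ v * dd t v (real N - real v) *
           (ffr (real N - real k) v * ffr (real N) k * real (Stirling A k)) / real N ^ A)"
  proof (rule sum.cong)
    fix k assume k: "k \<in> {..N}"
    have "real k ^ t = (\<Sum>v\<le>t. (-1) ^ v * ffr (real N - real k) v * dd t v (real N - real v))"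
      using Q_id[where t=t and m="real N - real k" and y="real N"] by simp
    then show "real k ^ t * (real (falling_fact N k) / real N ^ A) * real (Stirling A k) =
      (\<Sum>v\<le>t. (-1) ^ v * dd t v (real N - real v) *
           (ffr (real N - real k) v * ffr (real N) k * real (Stirling A k)) / real N ^ A)"
      by (simp add: ff_real sum_distrib_left sum_divide_distrib ac_simps)
  qed (simp add: atLeast0AtMost)
  also have "\<dots> = (\<Sum>v\<le>t. (-1) ^ v * dd t v (real N - real v) *
           (\<Sum>k\<le>N. ffr (real N - real k) v * ffr (real N) k * real (Stirling A k)) / real N ^ A)"
    by (subst sum.swap) (simp add: sum_distrib_left sum_divide_distrib)
  also have "\<dots> = (\<Sum>v\<le>t. \<Sum>s\<le>t. G v s)"
    unfolding stepb
  proof (rule sum.cong)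
    fix v assume "v \<in> {..t}"
    show "(-1) ^ v * dd t v (real N - real v) * (ffr (real N) v * (real N - real v) ^ A) / real N ^ A
        = (\<Sum>s\<le>t. G v s)"
      unfolding dd_def G_def pw ff_real
      by (simp add: sum_distrib_left sum_distrib_right sum_divide_distrib algebra_simps)
  qed simp
  also have "\<dots> = (\<Sum>v\<le>t. \<Sum>s\<in>{v..t}. G v s)"
    by (rule sum.cong, simp, rule sum.mono_neutral_right) (auto simp: G_def)
  also have "\<dots> = (\<Sum>(v, s) \<in> (SIGMA v:{..t}. {v..t}). G v s)"
    by (rule sum.Sigma) auto
  also have "\<dots> = (\<Sum>(u, v, w) \<in> {(u, v, w). u + v + w = t}.
             real (t choose u) * (-1) ^ v * real (Stirling (v + w) v) * real (falling_fact N v)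
             * (real N - real v) ^ u * (1 - real v / real N) ^ A)"
  proof (rule sum.reindex_bij_witness[where i = "\<lambda>(u, v, w). (v, v + w)" and j = "\<lambda>(v, s). (t - s, v, s - v)"])
    fix a assume "a \<in> (SIGMA v:{..t}. {v..t})"
    then show "(case case a of (v, s) \<Rightarrow> (t - s, v, s - v) of (u, v, w) \<Rightarrow> (v, v + w)) = a"
      by auto
  next
    fix a assume "a \<in> (SIGMA v:{..t}. {v..t})"
    then show "(case a of (v, s) \<Rightarrow> (t - s, v, s - v)) \<in> {(u, v, w). u + v + w = t}"
      by auto
  next
    fix b assume "b \<in> {(u, v, w). u + v + w = t}"
    then show "(case case b of (u, v, w) \<Rightarrow> (v, v + w) of (v, s) \<Rightarrow> (t - s, v, s - v)) = b"
      by auto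
  next
    fix b assume "b \<in> {(u, v, w). u + v + w = t}"
    then show "(case b of (u, v, w) \<Rightarrow> (v, v + w)) \<in> (SIGMA v:{..t}. {v..t})"
      by auto
  next
    fix a assume "a \<in> (SIGMA v:{..t}. {v..t})"
    then obtain v s where a: "a = (v, s)" "v \<le> s" "s \<le> t" by auto
    have "t choose (t - s) = t choose s" using a binomial_symmetric[of s t] by simp
    then show "(case case a of (v, s) \<Rightarrow> (t - s, v, s - v) of
           (u, v, w) \<Rightarrow> real (t choose u) * (- 1) ^ v * real (Stirling (v + w) v) *
              real (falling_fact N v) * (real N - real v) ^ u * (1 - real v / real N) ^ A)
          = (case a of (v, s) \<Rightarrow> G v s)"
      using a by (simp add: G_def)
  qed
  finally show ?thesis .
qed



definition Om :: "nat \<Rightarrow> nat \<Rightarrow> (nat \<Rightarrow> nat) set" where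
  "Om N A = PiE {..<A} (\<lambda>_. {..<N})"

definition cnt :: "nat \<Rightarrow> nat \<Rightarrow> nat \<Rightarrow> nat" where
  "cnt N A k = card {f \<in> Om N A. card (f ` {..<A}) = k}"

lemma Om_finite: "finite (Om N A)"
  unfolding Om_def by (simp add: finite_PiE)

lemma Om_card: "card (Om N A) = N ^ A"
  unfolding Om_def by (simp add: card_PiE)

lemma Om_img: "f \<in> Om N A \<Longrightarrow> f ` {..<A} \<subseteq> {..<N}"
  unfolding Om_def by (auto simp: PiE_def Pi_def)

lemma inner_card:
  assumes "I \<subseteq> {..<N}"
  shows "card {x \<in> {..<N}. card (insert x I) = k}
       = (if k = card I then card I else 0) + (if k = Suc (card I) then N - card I else 0)"
proof -
  have fI: "finite I" using assms finite_subset by blast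
  have ci: "card (insert x I) = (if x \<in> I then card I else Suc (card I))" for x
    using fI by (simp add: insert_absorb)
  show ?thesis
  proof (cases "k = card I")
    case True
    then have "{x \<in> {..<N}. card (insert x I) = k} = I" using assms ci by auto
    then show ?thesis using True by simp
  next
    case F: False
    show ?thesis
    proof (cases "k = Suc (card I)")
      case True
      then have "{x \<in> {..<N}. card (insert x I) = k} = {..<N} - I" using ci by auto
      then show ?thesis using True assms fI by (simp add: card_Diff_subset)
    next
      case False
      then have "{x \<in> {..<N}. card (insert x I) = k} = {}" using ci F by auto
      then show ?thesis using F False by simp
    qed
  qed
qed

lemma card_step:
  "cnt N (Suc A) k = (\<Sum>g\<in>Om N A. card {x \<in> {..<N}. card (insert x (g ` {..<A})) = k})"
proof -
  let ?S = "SIGMA g:Om N A. {x \<in> {..<N}. card (insert x (g ` {..<A})) = k}"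
  let ?T = "{f \<in> Om N (Suc A). card (f ` {..<Suc A}) = k}"
  have img: "(g(A := x)) ` {..<Suc A} = insert x (g ` {..<A})" for g :: "nat \<Rightarrow> nat" and x
    by (auto simp: lessThan_Suc)
  have bij: "bij_betw (\<lambda>(g, x). g(A := x)) ?S ?T"
  proof (rule bij_betw_byWitness[where f' = "\<lambda>f. (f(A := undefined), f A)"])
    show "\<forall>a\<in>?S. (\<lambda>f. (f(A := undefined), f A)) ((\<lambda>(g, x). g(A := x)) a) = a"
      by (auto simp: Om_def PiE_def extensional_def)
    show "\<forall>a'\<in>?T. (\<lambda>(g, x). g(A := x)) ((\<lambda>f. (f(A := undefined), f A)) a') = a'"
      by auto
    show "(\<lambda>(g, x). g(A := x)) ` ?S \<subseteq> ?T"
      using img by (auto simp: Om_def PiE_def Pi_def extensional_def)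
    show "(\<lambda>f. (f(A := undefined), f A)) ` ?T \<subseteq> ?S"
    proof
      fix p assume "p \<in> (\<lambda>f. (f(A := undefined), f A)) ` ?T"
      then obtain f where f: "f \<in> ?T" and p: "p = (f(A := undefined), f A)" by blast
      have e: "f ` {..<Suc A} = insert (f A) ((f(A := undefined)) ` {..<A})"
        by (auto simp: lessThan_Suc)
      show "p \<in> ?S"
        using f e unfolding p by (auto simp: Om_def PiE_def Pi_def extensional_def)
    qed
  qed
  have "cnt N (Suc A) k = card ?S"
    unfolding cnt_def using bij_betw_same_card[OF bij] by simp
  also have "\<dots> = (\<Sum>g\<in>Om N A. card {x \<in> {..<N}. card (insert x (g ` {..<A})) = k})"
    by (rule card_SigmaI) (auto simp: Om_finite)
  finally show ?thesis .
qed

lemma sum_if_const: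
  "finite S \<Longrightarrow> (\<Sum>x\<in>S. if P x then c else 0) = (c :: nat) * card {x \<in> S. P x}"
  by (simp add: sum.If_cases Int_def)

lemma cnt_rec:
  "cnt N (Suc A) k = k * cnt N A k + (if k = 0 then 0 else (N - (k - 1)) * cnt N A (k - 1))"
proof -
  have "cnt N (Suc A) k = (\<Sum>g\<in>Om N A. (if card (g ` {..<A}) = k then k else 0)
      + (if card (g ` {..<A}) = k - 1 \<and> k \<noteq> 0 then N - (k - 1) else 0))"
    unfolding card_step
  proof (rule sum.cong)
    fix g assume g: "g \<in> Om N A"
    show "card {x \<in> {..<N}. card (insert x (g ` {..<A})) = k} =
      (if card (g ` {..<A}) = k then k else 0) +
      (if card (g ` {..<A}) = k - 1 \<and> k \<noteq> 0 then N - (k - 1) else 0)"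
      unfolding inner_card[OF Om_img[OF g]] by auto
  qed simp
  also have "\<dots> = k * cnt N A k + (if k = 0 then 0 else (N - (k - 1)) * cnt N A (k - 1))"
    unfolding sum.distrib cnt_def by (simp add: sum_if_const Om_finite)
  finally show ?thesis .
qed

lemma cnt_formula: "cnt N A k = falling_fact N k * Stirling A k"
proof (induction A arbitrary: k)
  case 0
  have "Om N 0 = {\<lambda>_. undefined}" by (simp add: Om_def)
  then show ?case
    by (cases k) (auto simp: cnt_def falling_fact_def)
next
  case (Suc A)
  show ?case
  proof (cases k)
    case 0 then show ?thesis by (simp add: cnt_rec)
  next
    case (Suc m)
    have h: "(x::nat) * (b * d * c) + d * (b * e) = b * d * (x * c + e)" for x b d c e
      by (simp add: algebra_simps)
    have "cnt N (Suc A) k = Suc m * (falling_fact N m * (N - m) * Stirling A (Suc m))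
        + (N - m) * (falling_fact N m * Stirling A m)"
      using Suc by (simp add: cnt_rec Suc.IH ff_Suc)
    also have "\<dots> = falling_fact N m * (N - m) * (Suc m * Stirling A (Suc m) + Stirling A m)"
      by (rule h)
    finally show ?thesis using Suc by (simp add: ff_Suc)
  qed
qed



theorem mainTheorem1:
  fixes N A t :: nat
  assumes "N \<ge> 1"
  shows "(\<forall>k \<le> N. measure_pmf.prob (draws_pmf N A) {f. distinct_count A f = k}
            = real (falling_fact N k) / real N ^ A * real (Stirling A k))
    \<and> measure_pmf.expectation (draws_pmf N A) (\<lambda>f. real (distinct_count A f) ^ t)
        = (\<Sum>k = 0..N. real k ^ t * (real (falling_fact N k) / real N ^ A) * real (Stirling A k))
    \<and> (\<Sum>k = 0..N. real k ^ t * (real (falling_fact N k) / real N ^ A) * real (Stirling A k))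
        = (\<Sum>(u, v, w) \<in> {(u, v, w). u + v + w = t}.
             real (t choose u) * (-1) ^ v * real (Stirling (v + w) v) * real (falling_fact N v)
             * (real N - real v) ^ u * (1 - real v / real N) ^ A)"
proof (intro conjI allI impI)
  have fin: "finite (Om N A)" by (rule Om_finite)
  have ne: "Om N A \<noteq> {}"
    using Om_card[of N A] assms by (metis card.empty not_one_le_zero one_le_power power_eq_0_iff)
  have dp: "draws_pmf N A = pmf_of_set (Om N A)" by (simp add: draws_pmf_def Om_def)
  fix k assume "k \<le> N"
  have "Om N A \<inter> {f. distinct_count A f = k} = {f \<in> Om N A. card (f ` {..<A}) = k}"
    by (auto simp: distinct_count_def)
  then show "measure_pmf.prob (draws_pmf N A) {f. distinct_count A f = k}
            = real (falling_fact N k) / real N ^ A * real (Stirling A k)"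
    unfolding dp measure_pmf_of_set[OF ne fin]
    by (simp add: Om_card flip: cnt_def) (simp add: cnt_formula)
next
  have fin: "finite (Om N A)" by (rule Om_finite)
  have ne: "Om N A \<noteq> {}"
    using Om_card[of N A] assms by (metis card.empty not_one_le_zero one_le_power power_eq_0_iff)
  have dp: "draws_pmf N A = pmf_of_set (Om N A)" by (simp add: draws_pmf_def Om_def)
  have "(\<Sum>f\<in>Om N A. real (distinct_count A f) ^ t)
      = (\<Sum>k\<in>{0..N}. \<Sum>f\<in>{f. f \<in> Om N A \<and> distinct_count A f = k}. real (distinct_count A f) ^ t)"
  proof (rule sum.group[symmetric, OF fin])
    show "finite {0..N}" by simp
    show "distinct_count A ` Om N A \<subseteq> {0..N}"
    proof
      fix y assume "y \<in> distinct_count A ` Om N A"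
      then obtain f where f: "f \<in> Om N A" "y = distinct_count A f" by blast
      have "card (f ` {..<A}) \<le> card {..<N}" by (rule card_mono) (auto simp: Om_img[OF f(1)])
      then show "y \<in> {0..N}" using f by (simp add: distinct_count_def)
    qed
  qed
  also have "\<dots> = (\<Sum>k\<in>{0..N}. real k ^ t * real (cnt N A k))"
  proof (rule sum.cong)
    fix k assume "k \<in> {0..N}"
    have "(\<Sum>f\<in>{f. f \<in> Om N A \<and> distinct_count A f = k}. real (distinct_count A f) ^ t)
        = (\<Sum>f\<in>{f \<in> Om N A. card (f ` {..<A}) = k}. real k ^ t)"
      by (rule sum.cong) (auto simp: distinct_count_def)
    then show "(\<Sum>f\<in>{f. f \<in> Om N A \<and> distinct_count A f = k}. real (distinct_count A f) ^ t)
        = real k ^ t * real (cnt N A k)"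
      by (simp add: cnt_def)
  qed simp
  finally have s: "(\<Sum>f\<in>Om N A. real (distinct_count A f) ^ t) = (\<Sum>k\<in>{0..N}. real k ^ t * real (cnt N A k))" .
  show "measure_pmf.expectation (draws_pmf N A) (\<lambda>f. real (distinct_count A f) ^ t)
        = (\<Sum>k = 0..N. real k ^ t * (real (falling_fact N k) / real N ^ A) * real (Stirling A k))"
    unfolding dp integral_pmf_of_set[OF ne fin] s Om_card cnt_formula
    by (simp add: sum_divide_distrib mult.assoc)
next
  show "(\<Sum>k = 0..N. real k ^ t * (real (falling_fact N k) / real N ^ A) * real (Stirling A k))
        = (\<Sum>(u, v, w) \<in> {(u, v, w). u + v + w = t}.
             real (t choose u) * (-1) ^ v * real (Stirling (v + w) v) * real (falling_fact N v)
             * (real N - real v) ^ u * (1 - real v / real N) ^ A)"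
    by (rule part3[OF assms])
qed

end
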